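(* The maps $U_r$ for $r \le m$ are injective if and only if $U_m$ is injective.
   Context: Let $A \ge B \ge C \ge 1$ be integers, let $\Bbbk$ be a field, and let $R = \Bbbk[x,y,z]/(x^A,y^B,z^C)$ with its standard grading ($x,y,z$ of degree one), $R = \bigoplus_{r=0}^{e} R_r$ where $e := A+B+C-3$. For each $r$, let $U_r : R_r \to R_{r+1}$ be the map given by multiplication by $x+y+z$. Let $m := \lfloor \frac{e-1}{2} \rfloor$, so that $U_m$ is a map closest to the middle of $R$. *)

theory Defs
  imports Main
begin

text \<open>R = k[x,y,z]/(x^A,y^B,z^C). The degree-r component R_r has as k-basis the
monomials x^a y^b z^c with a<A, b<B, c<C, a+b+c=r. An element of R_r is represented
by its coefficient function on exponent triples, supported on these monomials.
Degrees are integers; R_r = 0 for r < 0.\<close>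

definition mons :: "nat \<Rightarrow> nat \<Rightarrow> nat \<Rightarrow> int \<Rightarrow> (nat \<times> nat \<times> nat) set" where
  "mons A B C r = {(a,b,c). a < A \<and> b < B \<and> c < C \<and> int (a+b+c) = r}"

definition Rdeg :: "nat \<Rightarrow> nat \<Rightarrow> nat \<Rightarrow> int \<Rightarrow> (nat \<times> nat \<times> nat \<Rightarrow> 'k::field) set" where
  "Rdeg A B C r = {f. \<forall>p. p \<notin> mons A B C r \<longrightarrow> f p = 0}"

text \<open>Multiplication by x+y+z, R_r \<rightarrow> R_(r+1): the coefficient of x^a y^b z^c in
(x+y+z) f is f(a-1,b,c)+f(a,b-1,c)+f(a,b,c-1) (missing terms zero), and monomials
outside the box vanish in the quotient.\<close>

definition Umap :: "nat \<Rightarrow> nat \<Rightarrow> nat \<Rightarrow> int \<Rightarrow> (nat \<times> nat \<times> nat \<Rightarrow> 'k::field)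
    \<Rightarrow> (nat \<times> nat \<times> nat \<Rightarrow> 'k)" where
  "Umap A B C r f = (\<lambda>(a,b,c).
     if (a,b,c) \<in> mons A B C (r+1) then
       (if 0 < a then f (a-1,b,c) else 0) +
       (if 0 < b then f (a,b-1,c) else 0) +
       (if 0 < c then f (a,b,c-1) else 0)
     else 0)"

end

theory Submission
  imports Defs "HOL-Library.Function_Algebras"
begin

definition mX :: "nat \<Rightarrow> nat \<Rightarrow> nat \<Rightarrow> (nat \<times> nat \<times> nat \<Rightarrow> 'k::field) \<Rightarrow> (nat \<times> nat \<times> nat \<Rightarrow> 'k)" where
  "mX A B C f = (\<lambda>(a,b,c). if a < A \<and> b < B \<and> c < C \<and> 0 < a then f (a-1,b,c) else 0)"
definition mY :: "nat \<Rightarrow> nat \<Rightarrow> nat \<Rightarrow> (nat \<times> nat \<times> nat \<Rightarrow> 'k::field) \<Rightarrow> (nat \<times> nat \<times> nat \<Rightarrow> 'k)" where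
  "mY A B C f = (\<lambda>(a,b,c). if a < A \<and> b < B \<and> c < C \<and> 0 < b then f (a,b-1,c) else 0)"
definition mZ :: "nat \<Rightarrow> nat \<Rightarrow> nat \<Rightarrow> (nat \<times> nat \<times> nat \<Rightarrow> 'k::field) \<Rightarrow> (nat \<times> nat \<times> nat \<Rightarrow> 'k)" where
  "mZ A B C f = (\<lambda>(a,b,c). if a < A \<and> b < B \<and> c < C \<and> 0 < c then f (a,b,c-1) else 0)"

lemma mX_R: "f \<in> Rdeg A B C r \<Longrightarrow> mX A B C f \<in> Rdeg A B C (r+1)"
  by (auto simp: Rdeg_def mX_def mons_def)
lemma mY_R: "f \<in> Rdeg A B C r \<Longrightarrow> mY A B C f \<in> Rdeg A B C (r+1)"
  by (auto simp: Rdeg_def mY_def mons_def)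
lemma mZ_R: "f \<in> Rdeg A B C r \<Longrightarrow> mZ A B C f \<in> Rdeg A B C (r+1)"
  by (auto simp: Rdeg_def mZ_def mons_def)

lemma mX_U: "Umap A B C (r+1) (mX A B C f) = mX A B C (Umap A B C r f)"
  by (rule ext) (auto simp: Umap_def mX_def mons_def)
lemma mY_U: "Umap A B C (r+1) (mY A B C f) = mY A B C (Umap A B C r f)"
  by (rule ext) (auto simp: Umap_def mY_def mons_def)
lemma mZ_U: "Umap A B C (r+1) (mZ A B C f) = mZ A B C (Umap A B C r f)"
  by (rule ext) (auto simp: Umap_def mZ_def mons_def)

lemma U_diff: "Umap A B C r (f - g) = Umap A B C r f - Umap A B C r g"
  by (rule ext) (auto simp: Umap_def)

lemma U_zero: "Umap A B C r 0 = 0"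
  by (rule ext) (auto simp: Umap_def)

lemma inj_iff_ker:
  "inj_on (Umap A B C r :: _ \<Rightarrow> _ \<Rightarrow> 'k::field) (Rdeg A B C r) \<longleftrightarrow>
   (\<forall>f\<in>Rdeg A B C r. Umap A B C r f = 0 \<longrightarrow> f = (0 :: _ \<Rightarrow> 'k))"
proof
  assume i: "inj_on (Umap A B C r :: _ \<Rightarrow> _ \<Rightarrow> 'k::field) (Rdeg A B C r)"
  have z: "(0:: _ \<Rightarrow> 'k) \<in> Rdeg A B C r" by (simp add: Rdeg_def)
  show "\<forall>f\<in>Rdeg A B C r. Umap A B C r f = 0 \<longrightarrow> (f :: _ \<Rightarrow> 'k) = 0"
    using i z U_zero by (metis inj_onD)
next
  assume k: "\<forall>f\<in>Rdeg A B C r. Umap A B C r f = 0 \<longrightarrow> (f :: _ \<Rightarrow> 'k) = 0"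
  show "inj_on (Umap A B C r :: _ \<Rightarrow> _ \<Rightarrow> 'k::field) (Rdeg A B C r)"
  proof (rule inj_onI)
    fix f g :: "_ \<Rightarrow> 'k" assume f: "f \<in> Rdeg A B C r" and g: "g \<in> Rdeg A B C r"
      and e: "Umap A B C r f = Umap A B C r g"
    have "f - g \<in> Rdeg A B C r" using f g by (auto simp: Rdeg_def)
    moreover have "Umap A B C r (f - g) = 0" by (simp only: U_diff e, simp)
    ultimately have "f - g = 0" using k by blast
    then show "f = g" by simp
  qed
qed

lemma step:
  fixes f :: "_ \<Rightarrow> 'k::field"
  assumes f: "f \<in> Rdeg A B C r" and nz: "f \<noteq> 0" and k: "Umap A B C r f = 0"
    and lt: "r + 3 < int (A+B+C)"
  shows "\<exists>g \<in> Rdeg A B C (r+1). g \<noteq> (0 :: _ \<Rightarrow> 'k) \<and> Umap A B C (r+1) g = 0"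
proof -
  obtain a b c where p: "f (a,b,c) \<noteq> 0" using nz by (metis ext prod_cases3 zero_fun_def)
  then have pm: "(a,b,c) \<in> mons A B C r" using f by (auto simp: Rdeg_def)
  then have hh: "a < A" "b < B" "c < C" "int (a+b+c) = r" by (auto simp: mons_def)
  have "a + 1 < A \<or> b + 1 < B \<or> c + 1 < C" using hh lt by linarith
  moreover
  { assume "a + 1 < A"
    then have "mX A B C f (a+1,b,c) \<noteq> 0" using hh p by (simp add: mX_def)
    then have "mX A B C f \<noteq> 0" by auto
    moreover have "Umap A B C (r+1) (mX A B C f) = 0"
      by (simp add: mX_U k, rule ext, simp add: mX_def split: prod.split)
    ultimately have ?thesis using mX_R[OF f] by blast }
  moreover
  { assume "b + 1 < B"
    then have "mY A B C f (a,b+1,c) \<noteq> 0" using hh p by (simp add: mY_def)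
    then have "mY A B C f \<noteq> 0" by auto
    moreover have "Umap A B C (r+1) (mY A B C f) = 0"
      by (simp add: mY_U k, rule ext, simp add: mY_def split: prod.split)
    ultimately have ?thesis using mY_R[OF f] by blast }
  moreover
  { assume "c + 1 < C"
    then have "mZ A B C f (a,b,c+1) \<noteq> 0" using hh p by (simp add: mZ_def)
    then have "mZ A B C f \<noteq> 0" by auto
    moreover have "Umap A B C (r+1) (mZ A B C f) = 0"
      by (simp add: mZ_U k, rule ext, simp add: mZ_def split: prod.split)
    ultimately have ?thesis using mZ_R[OF f] by blast }
  ultimately show ?thesis by blast
qed

lemma prop_up:
  fixes m :: int
  assumes lt: "m + 3 < int (A+B+C) + 1"
  shows "nat (m - r) = n \<Longrightarrow> r \<le> m \<Longrightarrow> f \<in> Rdeg A B C r \<Longrightarrow> (f :: _ \<Rightarrow> 'k::field) \<noteq> 0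
     \<Longrightarrow> Umap A B C r f = 0 \<Longrightarrow> \<exists>g \<in> Rdeg A B C m. g \<noteq> (0 :: _ \<Rightarrow> 'k) \<and> Umap A B C m g = 0"
proof (induction n arbitrary: r f)
  case 0
  then have "r = m" by simp
  then show ?case using 0 by blast
next
  case (Suc n)
  have "r + 3 < int (A+B+C)" using Suc.prems(1) lt by linarith
  then obtain g where g: "g \<in> Rdeg A B C (r+1)" "g \<noteq> (0 :: _ \<Rightarrow> 'k)" "Umap A B C (r+1) g = 0"
    using step[OF Suc.prems(3,4,5)] by blast
  show ?case by (rule Suc.IH[OF _ _ g]) (use Suc.prems(1) in linarith)+
qed

theorem corollary2:
  fixes A B C :: nat and m :: int
  assumes "A \<ge> B" and "B \<ge> C" and "C \<ge> 1"
    and "m = (int (A+B+C) - 3 - 1) div 2"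
  shows "(\<forall>r\<le>m. inj_on (Umap A B C r :: _ \<Rightarrow> _ \<Rightarrow> 'k::field) (Rdeg A B C r))
     \<longleftrightarrow> inj_on (Umap A B C m :: _ \<Rightarrow> _ \<Rightarrow> 'k::field) (Rdeg A B C m)"
proof
  assume "\<forall>r\<le>m. inj_on (Umap A B C r :: _ \<Rightarrow> _ \<Rightarrow> 'k::field) (Rdeg A B C r)"
  then show "inj_on (Umap A B C m :: _ \<Rightarrow> _ \<Rightarrow> 'k::field) (Rdeg A B C m)" by simp
next
  assume im: "inj_on (Umap A B C m :: _ \<Rightarrow> _ \<Rightarrow> 'k::field) (Rdeg A B C m)"
  have lt: "m + 3 < int (A+B+C) + 1" using assms by linarith
  show "\<forall>r\<le>m. inj_on (Umap A B C r :: _ \<Rightarrow> _ \<Rightarrow> 'k::field) (Rdeg A B C r)"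
  proof (intro allI impI)
    fix r assume r: "r \<le> m"
    show "inj_on (Umap A B C r :: _ \<Rightarrow> _ \<Rightarrow> 'k::field) (Rdeg A B C r)"
    proof (subst inj_iff_ker, intro ballI impI)
      fix f :: "_ \<Rightarrow> 'k" assume f: "f \<in> Rdeg A B C r" and u: "Umap A B C r f = 0"
      show "f = 0"
      proof (rule ccontr)
        assume "f \<noteq> 0"
        then obtain g where "g \<in> Rdeg A B C m" "g \<noteq> (0 :: _ \<Rightarrow> 'k)" "Umap A B C m g = 0"
          using prop_up[OF lt refl r f _ u] by blast
        then show False using im by (subst (asm) inj_iff_ker) blast
      qed
    qed
  qed
qed

end
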